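(* Let $q$ be a prime power, $r$ a prime with $r\mid(q-1)$ and $r\ge3$, and $q/2\le\ell\le q-1$. The quantum Tamo–Barg code $\mathrm{CSS}(C,C)$ with parameters $q,r,\ell$ has distance at least \[ d=(q-1)\left(1-\frac{1}{2r}-\sqrt{\frac{1}{4r^2}+\frac{r-1}{r}\cdot\frac{\ell-1}{q-1}}\right). \]
   Context: $[n]=\{0,\dots,n-1\}$, $\mathbb{F}_q^*=\mathbb{F}_q\setminus\{0\}$. For $S\subseteq\mathbb{Z}_{\ge0}$, $\mathbb{F}_q[X]^S=\{\sum_{i\in S}a_iX^i\}$, $\mathrm{ev}(f)=(f(x))_{x\in\mathbb{F}_q^*}$. Let $S=\{i\in[\ell]:i\not\equiv r-1\pmod r\}\cup\{i\in[q-1]:i\equiv1\pmod r\}$, $C=\mathrm{ev}(\mathbb{F}_q[X]^S)\subseteq\mathbb{F}_q^{q-1}$; for $\ell\ge q/2$, $C^\perp\subseteq C$ and the quantum Tamo–Barg code is the CSS code $\mathrm{CSS}(C,C)=\mathrm{span}\{\sum_{y\in C^\perp}|x+y\rangle:x\in C\}$. Its distance is $\min\{|c|:c\in C\setminus C^\perp\}$, $|c|$ the Hamming weight. *)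

theory Defs
  imports Complex_Main "HOL-Computational_Algebra.Polynomial" "HOL-Computational_Algebra.Primes" "HOL-Library.Cardinality"
begin

definition TB_S :: "nat \<Rightarrow> nat \<Rightarrow> nat \<Rightarrow> nat set" where
  "TB_S q r l = {i. i < l \<and> i mod r \<noteq> (r - 1) mod r} \<union> {i. i < q - 1 \<and> i mod r = 1 mod r}"

definition poly_span :: "nat set \<Rightarrow> 'a::comm_ring_1 poly set" where
  "poly_span S = {f. \<forall>i. coeff f i \<noteq> 0 \<longrightarrow> i \<in> S}"

text \<open>Vectors in F_q^{q-1} are represented as functions on F_q indexed by the
  nonzero elements, normalised to 0 at the point 0.\<close>
definition ev :: "'a::field poly \<Rightarrow> ('a \<Rightarrow> 'a)" where
  "ev f = (\<lambda>x. if x = 0 then 0 else poly f x)"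

definition TB_code :: "nat \<Rightarrow> nat \<Rightarrow> ('a::{finite,field} \<Rightarrow> 'a) set" where
  "TB_code r l = ev ` poly_span (TB_S CARD('a) r l)"

definition dual_code :: "('a::{finite,field} \<Rightarrow> 'a) set \<Rightarrow> ('a \<Rightarrow> 'a) set" where
  "dual_code C = {c. c 0 = 0 \<and> (\<forall>d\<in>C. (\<Sum>x\<in>{x. x \<noteq> 0}. c x * d x) = 0)}"

definition hweight :: "('a::{finite,zero} \<Rightarrow> 'a) \<Rightarrow> nat" where
  "hweight c = card {x. x \<noteq> 0 \<and> c x \<noteq> 0}"

end

theory Submission
  imports Defs "HOL-Analysis.Analysis"
begin

lemma card_nz: "card {x::'a::{finite,field}. x \<noteq> 0} = CARD('a) - 1"
proof -
  have "{x::'a. x \<noteq> 0} = UNIV - {0}" by auto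
  thus ?thesis by (simp add: card_Diff_singleton)
qed

lemma card_ge2: "CARD('a::{finite,field}) \<ge> 2"
proof -
  have "{0, 1::'a} \<subseteq> UNIV" by auto
  hence "card {0,1::'a} \<le> CARD('a)" by (intro card_mono) auto
  thus ?thesis by simp
qed

lemma fermat_ff:
  fixes x :: "'a::{finite,field}"
  assumes "x \<noteq> 0"
  shows "x ^ (CARD('a) - 1) = 1"
proof -
  let ?U = "{x::'a. x \<noteq> 0}"
  have bij: "bij_betw ((*) x) ?U ?U"
    by (rule bij_betwI[where g="\<lambda>y. y / x"]) (use assms in auto)
  have "prod (\<lambda>y. y) ?U = prod (\<lambda>y. x * y) ?U"
    using prod.reindex_bij_betw[OF bij, of "\<lambda>y. y"] by simp
  also have "\<dots> = x ^ card ?U * prod (\<lambda>y. y) ?U"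
    by (simp add: prod.distrib)
  finally have "x ^ card ?U * prod (\<lambda>y. y) ?U = 1 * prod (\<lambda>y. y) ?U" by simp
  moreover have "prod (\<lambda>y. y) ?U \<noteq> 0" by simp
  ultimately have "x ^ card ?U = 1" by (metis mult_right_cancel)
  thus ?thesis by (simp add: card_nz)
qed

lemma pow_mod_ff:
  fixes x :: "'a::{finite,field}"
  assumes "x \<noteq> 0"
  shows "x ^ k = x ^ (k mod (CARD('a) - 1))"
proof -
  let ?n = "CARD('a) - 1"
  have "x ^ k = x ^ (?n * (k div ?n) + k mod ?n)" by simp
  also have "\<dots> = (x ^ ?n) ^ (k div ?n) * x ^ (k mod ?n)"
    by (simp only: power_add power_mult)
  finally have "x ^ k = (x ^ ?n) ^ (k div ?n) * x ^ (k mod ?n)" .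
  thus ?thesis using fermat_ff[OF assms] by simp
qed

lemma powsum_ff:
  assumes "\<not> (CARD('a::{finite,field}) - 1) dvd k"
  shows "(\<Sum>x\<in>{x::'a. x \<noteq> 0}. x ^ k) = 0"
proof -
  let ?n = "CARD('a) - 1"
  let ?U = "{x::'a. x \<noteq> 0}"
  define k' where "k' = k mod ?n"
  have n0: "?n > 0" using card_ge2[where 'a='a] by linarith
  have k'pos: "k' > 0" using assms unfolding k'_def using dvd_eq_mod_eq_0 by auto
  have k'lt: "k' < ?n" using n0 by (simp add: k'_def)
  define p :: "'a poly" where "p = monom 1 k' - 1"
  have d1: "degree (monom (1::'a) k') = k'" by (simp add: degree_monom_eq)
  have d2: "degree (- 1 :: 'a poly) = 0" by simp
  have "p = monom 1 k' + (- 1)" by (simp add: p_def)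
  hence dp: "degree p = k'" using degree_add_eq_left[of "- 1" "monom (1::'a) k'"] d1 d2 k'pos by simp
  hence "p \<noteq> 0" using k'pos by auto
  hence "card {x. poly p x = 0} \<le> k'" using card_poly_roots_bound[of p] dp by simp
  hence "card {x. poly p x = 0} < card ?U" using k'lt card_nz[where 'a='a] by simp
  hence "\<not> ?U \<subseteq> {x. poly p x = 0}" using card_mono[of "{x. poly p x = 0}" ?U] by auto
  then obtain a where a0: "a \<noteq> 0" and "poly p a \<noteq> 0" by auto
  hence "a ^ k' \<noteq> 1" by (simp add: p_def poly_monom)
  hence ak: "a ^ k \<noteq> 1" using pow_mod_ff[OF a0, of k] by (simp add: k'_def)
  have bij: "bij_betw ((*) a) ?U ?U"
    by (rule bij_betwI[where g="\<lambda>y. y / a"]) (use a0 in auto)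
  have "(\<Sum>x\<in>?U. x ^ k) = (\<Sum>x\<in>?U. (a * x) ^ k)"
    using sum.reindex_bij_betw[OF bij, of "\<lambda>y. y ^ k"] by simp
  also have "\<dots> = a ^ k * (\<Sum>x\<in>?U. x ^ k)"
    by (simp add: power_mult_distrib sum_distrib_left)
  finally have "(a ^ k - 1) * (\<Sum>x\<in>?U. x ^ k) = 0" by (simp add: algebra_simps)
  thus ?thesis using ak by simp
qed

lemma pow_gcd_one:
  fixes z :: "'a::field"
  assumes "z ^ a = 1" "z ^ b = 1" "a \<noteq> 0"
  shows "z ^ gcd a b = 1"
proof -
  obtain x y where "a * x = b * y + gcd a b" using bezout_nat[OF assms(3), of b] by blast
  hence "z ^ (a * x) = z ^ (b * y) * z ^ gcd a b" by (simp add: power_add)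
  thus ?thesis using assms by (simp add: power_mult)
qed

lemma root_unity_exp:
  fixes z :: "'a::field"
  assumes "prime r" "z ^ r = 1" "z \<noteq> 1" "z ^ i = z"
  shows "i mod r = 1"
proof (cases i)
  case 0 thus ?thesis using assms by simp
next
  case (Suc j)
  have z0: "z \<noteq> 0" using assms prime_gt_0_nat by (metis zero_neq_one zero_power)
  have "z * z ^ j = z * 1" using assms Suc by simp
  hence zj: "z ^ j = 1" using z0 by simp
  have r0: "r \<noteq> 0" using assms prime_gt_0_nat by auto
  have "z ^ gcd r j = 1" using pow_gcd_one[OF assms(2) zj r0] .
  moreover have "\<not> r dvd j \<Longrightarrow> gcd r j = 1"
    using assms(1) by (simp add: prime_imp_coprime_nat)
  ultimately have "r dvd j" using assms(3) by (cases "r dvd j") auto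
  then obtain t where "j = r * t" by (elim dvdE)
  hence "i = 1 + t * r" using Suc by simp
  hence "i mod r = 1 mod r" using mod_mult_self1[of 1 t r] by simp
  moreover have "(1::nat) mod r = 1" using prime_gt_1_nat[OF assms(1)] mod_less by blast
  ultimately show ?thesis by simp
qed


lemma mu_card:
  assumes "r > 0" "r dvd CARD('a::{finite,field}) - 1"
  shows "card {z::'a. z ^ r = 1} = r"
proof (rule antisym)
  let ?n = "CARD('a) - 1"
  define p :: "'a poly" where "p = monom 1 r + (- 1)"
  have d1: "degree (monom (1::'a) r) = r" by (simp add: degree_monom_eq)
  have d2: "degree (- 1 :: 'a poly) = 0" by simp
  have dp: "degree p = r" unfolding p_def using degree_add_eq_left[of "- 1" "monom (1::'a) r"] d1 d2 assms(1) by simp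
  hence "p \<noteq> 0" using assms(1) by auto
  hence "card {x. poly p x = 0} \<le> r" using card_poly_roots_bound[of p] dp by simp
  moreover have "{x. poly p x = 0} = {z::'a. z ^ r = 1}" by (auto simp: p_def poly_monom)
  ultimately show "card {z::'a. z ^ r = 1} \<le> r" by simp
next
  let ?n = "CARD('a) - 1"
  let ?M = "{z::'a. z ^ r = 1}"
  let ?U = "{x::'a. x \<noteq> 0}"
  have n0: "?n > 0" using card_ge2[where 'a='a] by linarith
  obtain m where nm: "?n = r * m" using assms(2) by (elim dvdE)
  have m0: "m \<ge> 1" using n0 nm by (cases m) auto
  define Q :: "'a poly" where "Q = (\<Sum>i<m. monom 1 (r * i))"
  have pQ: "poly Q x = (\<Sum>i<m. (x ^ r) ^ i)" for x
    by (simp add: Q_def poly_sum poly_monom power_mult)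
  have "coeff Q 0 = (\<Sum>i<m. coeff (monom (1::'a) (r * i)) 0)" by (simp add: Q_def coeff_sum)
  also have "\<dots> = (\<Sum>i<m. if i = 0 then 1 else 0)"
    by (rule sum.cong) (use assms(1) in \<open>auto simp: coeff_monom\<close>)
  also have "\<dots> = 1" using m0 by simp
  finally have "Q \<noteq> 0" by auto
  have "degree Q \<le> r * (m - 1)" unfolding Q_def
  proof (rule degree_sum_le)
    fix i assume "i \<in> {..<m}"
    hence "r * i \<le> r * (m - 1)" by (intro mult_le_mono2) auto
    thus "degree (monom (1::'a) (r * i)) \<le> r * (m - 1)" by (simp add: degree_monom_eq)
  qed simp
  hence cQ: "card {x. poly Q x = 0} \<le> r * (m - 1)"
    using card_poly_roots_bound[OF \<open>Q \<noteq> 0\<close>] by linarith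
  have sub: "?U \<subseteq> ?M \<union> {x. poly Q x = 0}"
  proof
    fix x assume "x \<in> ?U"
    hence "x ^ ?n = 1" using fermat_ff by auto
    hence "(x ^ r) ^ m - 1 = 0" using nm by (simp add: power_mult)
    hence "(x ^ r - 1) * poly Q x = 0" using power_diff_1_eq[of "x ^ r" m] pQ by simp
    thus "x \<in> ?M \<union> {x. poly Q x = 0}" by auto
  qed
  have "?n = card ?U" by (simp add: card_nz)
  also have "\<dots> \<le> card (?M \<union> {x. poly Q x = 0})" by (rule card_mono[OF _ sub]) simp
  also have "\<dots> \<le> card ?M + card {x. poly Q x = 0}" by (rule card_Un_le)
  finally have "r * m \<le> card ?M + r * (m - 1)" using cQ nm by linarith
  moreover have "r * m = r * (m - 1) + r" using m0 by (cases m) auto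
  ultimately show "r \<le> card ?M" by linarith
qed

lemma poly_sum_lt:
  fixes p :: "'a::comm_ring_1 poly"
  assumes "\<And>i. coeff p i \<noteq> 0 \<Longrightarrow> i < N"
  shows "poly p x = (\<Sum>i<N. coeff p i * x ^ i)"
proof (cases "p = 0")
  case True thus ?thesis by simp
next
  case False
  hence "degree p < N" using assms[of "degree p"] by simp
  hence "{..degree p} \<subseteq> {..<N}" by auto
  hence "(\<Sum>i\<le>degree p. coeff p i * x ^ i) = (\<Sum>i<N. coeff p i * x ^ i)"
    by (intro sum.mono_neutral_left) (auto simp: coeff_eq_0)
  thus ?thesis by (simp add: poly_altdef)
qed

lemma span_lt:
  assumes "f \<in> poly_span (TB_S q r l)" "l \<le> q - 1" "coeff f i \<noteq> 0"
  shows "i < q - 1"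
  using assms by (auto simp: poly_span_def TB_S_def)

lemma not_dvd_sum:
  assumes "r \<ge> 3" "i mod r = 1" "j \<in> TB_S q r l"
  shows "\<not> r dvd (i + j)"
proof
  assume d: "r dvd (i + j)"
  have jr: "j mod r \<noteq> r - 1" using assms by (auto simp: TB_S_def)
  have "(i + j) mod r = (i mod r + j mod r) mod r" by (simp add: mod_add_eq)
  also have "\<dots> = (1 + j mod r) mod r" using assms by simp
  also have "\<dots> = 1 + j mod r"
  proof (intro mod_less)
    have "j mod r < r" using assms(1) by simp
    thus "1 + j mod r < r" using jr by linarith
  qed
  finally show False using d by simp
qed

lemma dual_part:
  fixes f :: "'a::{finite,field} poly"
  assumes "r \<ge> 3" "r dvd CARD('a) - 1" "l \<le> CARD('a) - 1"
    "f \<in> poly_span (TB_S CARD('a) r l)" "\<And>i. coeff f i \<noteq> 0 \<Longrightarrow> i mod r = 1"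
  shows "ev f \<in> dual_code (TB_code r l :: ('a \<Rightarrow> 'a) set)"
  unfolding dual_code_def
proof (intro CollectI conjI ballI)
  show "ev f 0 = 0" by (simp add: ev_def)
  let ?n = "CARD('a) - 1"
  let ?U = "{x::'a. x \<noteq> 0}"
  fix d assume "d \<in> (TB_code r l :: ('a \<Rightarrow> 'a) set)"
  then obtain g where g: "g \<in> poly_span (TB_S CARD('a) r l)" and dg: "d = ev g"
    by (auto simp: TB_code_def)
  have pf: "poly f x = (\<Sum>i<?n. coeff f i * x ^ i)" for x
    by (rule poly_sum_lt) (use span_lt[OF assms(4) assms(3)] in auto)
  have pg: "poly g x = (\<Sum>j<?n. coeff g j * x ^ j)" for x
    by (rule poly_sum_lt) (use span_lt[OF g assms(3)] in auto)
  have "(\<Sum>x\<in>?U. ev f x * d x) = (\<Sum>x\<in>?U. poly f x * poly g x)"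
    by (simp add: dg ev_def)
  also have "\<dots> = (\<Sum>x\<in>?U. \<Sum>i<?n. \<Sum>j<?n. coeff f i * coeff g j * x ^ (i + j))"
    by (simp add: pf pg sum_product power_add algebra_simps)
  also have "\<dots> = (\<Sum>i<?n. \<Sum>j<?n. coeff f i * coeff g j * (\<Sum>x\<in>?U. x ^ (i + j)))"
    by (simp add: sum.swap[of _ ?U] sum_distrib_left)
  also have "\<dots> = 0"
  proof (intro sum.neutral ballI)
    fix i j assume "i \<in> {..<?n}" "j \<in> {..<?n}"
    show "coeff f i * coeff g j * (\<Sum>x\<in>?U. x ^ (i + j)) = 0"
    proof (cases "coeff f i = 0 \<or> coeff g j = 0")
      case True thus ?thesis by auto
    next
      case False
      hence "i mod r = 1" "j \<in> TB_S CARD('a) r l" using assms(5) g by (auto simp: poly_span_def)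
      hence "\<not> r dvd (i + j)" using not_dvd_sum assms(1) by blast
      hence nd: "\<not> ?n dvd (i + j)" using assms(2) dvd_trans by blast
      show ?thesis using powsum_ff[OF nd] by simp
    qed
  qed
  finally show "(\<Sum>x\<in>?U. ev f x * d x) = 0" .
qed


lemma card_filter_sum:
  assumes "finite A"
  shows "card {x\<in>A. P x} = (\<Sum>x\<in>A. if P x then 1 else (0::nat))"
  using assms
proof (induct A rule: finite_induct)
  case empty thus ?case by simp
next
  case (insert a F)
  have e: "{x\<in>insert a F. P x} = (if P a then insert a {x\<in>F. P x} else {x\<in>F. P x})" by auto
  show ?case unfolding e using insert by (cases "P a") auto
qed

lemma root_pow_mod:
  fixes z :: "'a::field"
  assumes "z ^ r = 1" "i mod r = 1"
  shows "z ^ i = z"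
proof -
  have "z ^ i = z ^ (r * (i div r) + i mod r)" by simp
  also have "\<dots> = (z ^ r) ^ (i div r) * z ^ (i mod r)" by (simp only: power_add power_mult)
  finally show ?thesis using assms by simp
qed

lemma count_main:
  fixes f :: "'a::{finite,field} poly"
  assumes pr: "prime r" and rd: "r dvd CARD('a) - 1" and r3: "r \<ge> 3" and l1: "1 \<le> l"
    and ln: "l \<le> CARD('a) - 1"
    and fS: "f \<in> poly_span (TB_S CARD('a) r l)" and i0: "coeff f i0 \<noteq> 0" "i0 mod r \<noteq> 1"
  shows "real r * (real (card {y. y \<noteq> 0 \<and> poly f y = 0}))\<^sup>2
     \<le> real (CARD('a) - 1) * (real (card {y. y \<noteq> 0 \<and> poly f y = 0}) + real ((r - 1) * (l - 1)))"
proof -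
  let ?n = "CARD('a) - 1"
  define Z where "Z = {y::'a. y \<noteq> 0 \<and> poly f y = 0}"
  define M where "M = {z::'a. z ^ r = 1}"
  define M' where "M' = M - {1}"
  have r0: "r > 0" using r3 by simp
  have cM: "card M = r" unfolding M_def using mu_card[OF r0 rd] .
  have oneM: "1 \<in> M" by (simp add: M_def)
  have cM': "card M' = r - 1" unfolding M'_def using cM oneM by (simp add: card_Diff_singleton)
  define D where "D \<zeta> = (\<Sum>i\<le>degree f. monom (coeff f i * (\<zeta> ^ i - \<zeta>)) i)" for \<zeta> :: 'a
  have coeffD: "coeff (D \<zeta>) i = coeff f i * (\<zeta> ^ i - \<zeta>)" for \<zeta> i
  proof (cases "i \<le> degree f")
    case True thus ?thesis unfolding D_def by (rule coeff_sum_monom)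
  next
    case False
    hence "coeff f i = 0" by (simp add: coeff_eq_0)
    moreover have "coeff (D \<zeta>) i = 0" unfolding D_def coeff_sum
      by (rule sum.neutral) (use False in \<open>auto simp: coeff_monom\<close>)
    ultimately show ?thesis by simp
  qed
  have polyD: "poly (D \<zeta>) y = poly f (\<zeta> * y) - \<zeta> * poly f y" for \<zeta> y
  proof -
    have "poly (D \<zeta>) y = (\<Sum>i\<le>degree f. coeff f i * (\<zeta> ^ i - \<zeta>) * y ^ i)"
      by (simp add: D_def poly_sum poly_monom)
    also have "\<dots> = (\<Sum>i\<le>degree f. coeff f i * (\<zeta> * y) ^ i) - \<zeta> * (\<Sum>i\<le>degree f. coeff f i * y ^ i)"
      by (simp add: sum_distrib_left power_mult_distrib algebra_simps flip: sum_subtractf)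
    also have "\<dots> = poly f (\<zeta> * y) - \<zeta> * poly f y" by (simp add: poly_altdef)
    finally show ?thesis .
  qed
  have rootsD: "card {y. poly (D \<zeta>) y = 0} \<le> l - 1" if z: "\<zeta> \<in> M'" for \<zeta>
  proof -
    have zr: "\<zeta> ^ r = 1" "\<zeta> \<noteq> 1" using z by (auto simp: M'_def M_def)
    have "\<zeta> ^ i0 \<noteq> \<zeta>" using root_unity_exp[OF pr zr] i0(2) by blast
    hence "coeff (D \<zeta>) i0 \<noteq> 0" using i0(1) by (simp add: coeffD)
    hence Dn: "D \<zeta> \<noteq> 0" by auto
    have "degree (D \<zeta>) \<le> l - 1"
    proof (rule degree_le, intro allI impI)
      fix i assume "l - 1 < i"
      show "coeff (D \<zeta>) i = 0"
      proof (cases "coeff f i = 0")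
        case True thus ?thesis by (simp add: coeffD)
      next
        case False
        hence "i \<in> TB_S CARD('a) r l" using fS by (auto simp: poly_span_def)
        hence "i mod r = 1" using \<open>l - 1 < i\<close> l1 r3 by (auto simp: TB_S_def)
        hence "\<zeta> ^ i = \<zeta>" using root_pow_mod zr(1) by blast
        thus ?thesis by (simp add: coeffD)
      qed
    qed
    thus ?thesis using card_poly_roots_bound[OF Dn] by linarith
  qed
  have finZ: "finite Z" by simp
  have e1: "card {y\<in>Z. \<zeta> * y \<in> Z} \<le> l - 1" if z: "\<zeta> \<in> M'" for \<zeta>
  proof -
    have "{y\<in>Z. \<zeta> * y \<in> Z} \<subseteq> {y. poly (D \<zeta>) y = 0}"
      by (auto simp: Z_def polyD)
    hence "card {y\<in>Z. \<zeta> * y \<in> Z} \<le> card {y. poly (D \<zeta>) y = 0}" by (intro card_mono) auto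
    thus ?thesis using rootsD[OF z] by linarith
  qed
  have e2: "(\<Sum>\<zeta>\<in>M'. card {y\<in>Z. \<zeta> * y \<in> Z}) \<le> (r - 1) * (l - 1)"
    using sum_mono[of M' "\<lambda>\<zeta>. card {y\<in>Z. \<zeta> * y \<in> Z}" "\<lambda>_. l - 1"] e1 cM' by simp
  have e3: "(\<Sum>y\<in>Z. card {\<zeta>\<in>M'. \<zeta> * y \<in> Z}) = (\<Sum>\<zeta>\<in>M'. card {y\<in>Z. \<zeta> * y \<in> Z})"
    by (simp add: card_filter_sum sum.swap[of _ Z])
  have e4: "card {y'\<in>Z. y' ^ r = y ^ r} = Suc (card {\<zeta>\<in>M'. \<zeta> * y \<in> Z})" if y: "y \<in> Z" for y
  proof -
    have y0: "y \<noteq> 0" using y by (simp add: Z_def)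
    have "bij_betw (\<lambda>\<zeta>. \<zeta> * y) {\<zeta>\<in>M. \<zeta> * y \<in> Z} {y'\<in>Z. y' ^ r = y ^ r}"
    proof (rule bij_betwI[where g="\<lambda>y'. y' / y"])
      show "(\<lambda>\<zeta>. \<zeta> * y) \<in> {\<zeta> \<in> M. \<zeta> * y \<in> Z} \<rightarrow> {y' \<in> Z. y' ^ r = y ^ r}"
        by (auto simp: M_def power_mult_distrib)
      show "(\<lambda>y'. y' / y) \<in> {y' \<in> Z. y' ^ r = y ^ r} \<rightarrow> {\<zeta> \<in> M. \<zeta> * y \<in> Z}"
        using y0 by (auto simp: M_def power_divide)
    qed (use y0 in auto)
    hence "card {y'\<in>Z. y' ^ r = y ^ r} = card {\<zeta>\<in>M. \<zeta> * y \<in> Z}" by (simp add: bij_betw_same_card)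
    also have "{\<zeta>\<in>M. \<zeta> * y \<in> Z} = insert 1 {\<zeta>\<in>M'. \<zeta> * y \<in> Z}"
      using y oneM by (auto simp: M'_def)
    also have "card \<dots> = Suc (card {\<zeta>\<in>M'. \<zeta> * y \<in> Z})"
      by (rule card_insert_disjoint) (auto simp: M'_def)
    finally show ?thesis .
  qed
  define S2 where "S2 = (\<Sum>y\<in>Z. card {y'\<in>Z. y' ^ r = y ^ r})"
  have S2le: "S2 \<le> card Z + (r - 1) * (l - 1)"
  proof -
    have "S2 = (\<Sum>y\<in>Z. Suc (card {\<zeta>\<in>M'. \<zeta> * y \<in> Z}))"
      unfolding S2_def by (rule sum.cong) (use e4 in auto)
    also have "\<dots> = (\<Sum>y\<in>Z. 1 + card {\<zeta>\<in>M'. \<zeta> * y \<in> Z})" by simp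
    also have "\<dots> = card Z + (\<Sum>y\<in>Z. card {\<zeta>\<in>M'. \<zeta> * y \<in> Z})"
      by (subst sum.distrib) simp
    finally show ?thesis using e2 e3 by linarith
  qed
  define B where "B = (\<lambda>y. y ^ r) ` Z"
  define F where "F b = {y\<in>Z. y ^ r = b}" for b
  have S2eq: "S2 = (\<Sum>b\<in>B. card (F b) * card (F b))"
  proof -
    have "S2 = (\<Sum>b\<in>B. \<Sum>y\<in>F b. card {y'\<in>Z. y' ^ r = y ^ r})"
      unfolding S2_def B_def F_def by (rule sum.image_gen[OF finZ])
    also have "\<dots> = (\<Sum>b\<in>B. \<Sum>y\<in>F b. card (F b))"
      by (intro sum.cong refl) (auto simp: F_def)
    finally show ?thesis by simp
  qed
  have Zeq: "card Z = (\<Sum>b\<in>B. card (F b))"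
  proof -
    have "card Z = (\<Sum>y\<in>Z. 1)" by simp
    also have "\<dots> = (\<Sum>b\<in>B. \<Sum>y\<in>F b. 1)"
      unfolding B_def F_def by (rule sum.image_gen[OF finZ])
    finally show ?thesis by simp
  qed
  have Br: "card B * r \<le> ?n"
  proof -
    define G where "G b = {y::'a. y \<noteq> 0 \<and> y ^ r = b}" for b
    have Gr: "r \<le> card (G b)" if b: "b \<in> B" for b
    proof -
      obtain y0 where y0: "y0 \<in> Z" "b = y0 ^ r" using b by (auto simp: B_def)
      have y00: "y0 \<noteq> 0" using y0 by (simp add: Z_def)
      have "(\<lambda>\<zeta>. \<zeta> * y0) ` M \<subseteq> G b"
        using y0 y00 r0 by (auto simp: G_def M_def power_mult_distrib power_0_left)
      hence "card ((\<lambda>\<zeta>. \<zeta> * y0) ` M) \<le> card (G b)" by (intro card_mono) auto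
      moreover have "inj_on (\<lambda>\<zeta>. \<zeta> * y0) M" using y00 by (auto simp: inj_on_def)
      ultimately show ?thesis using cM by (simp add: card_image)
    qed
    have "card B * r = (\<Sum>b\<in>B. r)" by simp
    also have "\<dots> \<le> (\<Sum>b\<in>B. card (G b))" by (rule sum_mono) (use Gr in auto)
    also have "\<dots> = card (\<Union>b\<in>B. G b)"
      by (rule card_UN_disjoint[symmetric]) (auto simp: G_def)
    also have "\<dots> \<le> card {y::'a. y \<noteq> 0}" by (intro card_mono) (auto simp: G_def)
    finally show ?thesis by (simp add: card_nz)
  qed
  have CS: "(real (card Z))\<^sup>2 \<le> real S2 * real (card B)"
  proof -
    have "(real (card Z))\<^sup>2 = (\<Sum>b\<in>B. real (card (F b)))\<^sup>2" by (simp add: Zeq)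
    also have "\<dots> \<le> (\<Sum>b\<in>B. (real (card (F b)))\<^sup>2) * real (card B)"
      by (rule sum_squared_le_sum_of_squares)
    also have "\<dots> = real S2 * real (card B)" by (simp add: S2eq power2_eq_square)
    finally show ?thesis .
  qed
  have "real r * (real (card Z))\<^sup>2 \<le> real r * (real S2 * real (card B))"
    using CS by (simp add: mult_left_mono)
  also have "\<dots> = real S2 * real (card B * r)" by simp
  also have "\<dots> \<le> real S2 * real ?n"
  proof -
    have Brr: "real (card B * r) \<le> real ?n" using Br by (simp only: of_nat_le_iff)
    show ?thesis by (rule mult_left_mono[OF Brr]) simp
  qed
  also have "\<dots> \<le> real (card Z + (r - 1) * (l - 1)) * real ?n"
  proof -
    have S2r: "real S2 \<le> real (card Z + (r - 1) * (l - 1))" using S2le by (simp only: of_nat_le_iff)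
    show ?thesis by (rule mult_right_mono[OF S2r]) simp
  qed
  finally show ?thesis unfolding Z_def by (simp add: algebra_simps)
qed


lemma final_real:
  fixes n r z L :: real
  assumes n0: "n > 0" and r0: "r > 0" and L0: "L \<ge> 0"
    and key: "r * z\<^sup>2 \<le> n * (z + (r - 1) * L)" and r1: "r \<ge> 1"
  shows "n - z \<ge> n * (1 - 1 / (2 * r) - sqrt (1 / (4 * r ^ 2) + (r - 1) / r * (L / n)))"
proof -
  define X where "X = 1 / (4 * r ^ 2) + (r - 1) / r * (L / n)"
  define s where "s = sqrt X"
  have X0: "X \<ge> 0" unfolding X_def using r0 n0 L0 r1 by (intro add_nonneg_nonneg) auto
  have s0: "s \<ge> 0" using X0 by (simp add: s_def)
  have ss: "s\<^sup>2 = X" using X0 by (simp add: s_def)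
  define t where "t = z - n / (2 * r)"
  have k2: "z\<^sup>2 \<le> n * z / r + n * (r - 1) * L / r"
  proof -
    have "z\<^sup>2 = (r * z\<^sup>2) / r" using r0 by simp
    also have "\<dots> \<le> (n * (z + (r - 1) * L)) / r" using key r0 by (intro divide_right_mono) auto
    also have "\<dots> = n * z / r + n * (r - 1) * L / r" using r0 by (simp add: field_simps)
    finally show ?thesis .
  qed
  have t2: "t\<^sup>2 = z\<^sup>2 - n * z / r + n\<^sup>2 / (4 * r\<^sup>2)"
    unfolding t_def using r0 by (simp add: power2_eq_square field_simps)
  have "(n * s)\<^sup>2 = n\<^sup>2 * X" by (simp add: power_mult_distrib ss)
  also have "\<dots> = n\<^sup>2 / (4 * r\<^sup>2) + n * (r - 1) * L / r"
    using n0 r0 by (simp add: X_def field_simps power2_eq_square)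
  finally have nX: "(n * s)\<^sup>2 = n\<^sup>2 / (4 * r\<^sup>2) + n * (r - 1) * L / r" .
  have "t\<^sup>2 \<le> (n * s)\<^sup>2" using t2 nX k2 by linarith
  hence "t \<le> n * s" using power2_le_imp_le[of t "n * s"] n0 s0 by simp
  hence "z \<le> n / (2 * r) + n * s" by (simp add: t_def)
  moreover have "n * (1 - 1 / (2 * r) - s) = n - n / (2 * r) - n * s" by (simp add: algebra_simps)
  ultimately show ?thesis unfolding s_def X_def by linarith
qed


theorem theorem6p2:
  fixes r l :: nat
  assumes "prime r" and "r dvd CARD('a::{finite,field}) - 1" and "r \<ge> 3"
    and "real CARD('a) / 2 \<le> real l" and "l \<le> CARD('a) - 1"
  shows "\<forall>c \<in> (TB_code r l :: ('a \<Rightarrow> 'a) set) - dual_code (TB_code r l).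
           real (hweight c) \<ge> (real CARD('a) - 1) *
             (1 - 1 / (2 * real r) - sqrt (1 / (4 * real r ^ 2)
                + (real r - 1) / real r * ((real l - 1) / (real CARD('a) - 1))))"
proof
  fix c assume c: "c \<in> (TB_code r l :: ('a \<Rightarrow> 'a) set) - dual_code (TB_code r l)"
  then obtain f where fS: "f \<in> poly_span (TB_S CARD('a) r l)" and cf: "c = ev f"
    by (auto simp: TB_code_def)
  have q2: "CARD('a) \<ge> 2" by (rule card_ge2)
  have l1: "1 \<le> l" using assms(4) q2 by linarith
  have "\<exists>i0. coeff f i0 \<noteq> 0 \<and> i0 mod r \<noteq> 1"
  proof (rule ccontr)
    assume "\<not> ?thesis"
    hence "\<And>i. coeff f i \<noteq> 0 \<Longrightarrow> i mod r = 1" by blast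
    hence "ev f \<in> dual_code (TB_code r l :: ('a \<Rightarrow> 'a) set)"
      using dual_part[OF assms(3) assms(2) assms(5) fS] by blast
    thus False using c cf by simp
  qed
  then obtain i0 where i0: "coeff f i0 \<noteq> 0" "i0 mod r \<noteq> 1" by blast
  define Z where "Z = {y::'a. y \<noteq> 0 \<and> poly f y = 0}"
  have key: "real r * (real (card Z))\<^sup>2
     \<le> real (CARD('a) - 1) * (real (card Z) + real ((r - 1) * (l - 1)))"
    unfolding Z_def using count_main[OF assms(1,2,3) l1 assms(5) fS i0] .
  have "{x. x \<noteq> 0 \<and> c x \<noteq> 0} = {x::'a. x \<noteq> 0} - Z"
    by (auto simp: cf ev_def Z_def)
  hence "hweight c = card {x::'a. x \<noteq> 0} - card Z"
    unfolding hweight_def by (metis (no_types, lifting) card_Diff_subset finite mem_Collect_eq subsetI Z_def)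
  hence hw: "real (hweight c) = (real CARD('a) - 1) - real (card Z)"
  proof -
    assume h: "hweight c = card {x::'a. x \<noteq> 0} - card Z"
    have "Z \<subseteq> {x::'a. x \<noteq> 0}" by (auto simp: Z_def)
    hence "card Z \<le> card {x::'a. x \<noteq> 0}" by (intro card_mono) auto
    thus ?thesis using h q2 by (simp add: card_nz of_nat_diff)
  qed
  have nr: "real (CARD('a) - 1) = real CARD('a) - 1" using q2 by (simp add: of_nat_diff)
  have rl: "real ((r - 1) * (l - 1)) = (real r - 1) * (real l - 1)"
    using l1 assms(3) by (simp add: of_nat_diff)
  show "real (hweight c) \<ge> (real CARD('a) - 1) *
             (1 - 1 / (2 * real r) - sqrt (1 / (4 * real r ^ 2)
                + (real r - 1) / real r * ((real l - 1) / (real CARD('a) - 1))))"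
    unfolding hw
    by (rule final_real) (use key nr rl q2 l1 assms(3) in auto)
qed

end
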